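(* Let $D\in\mathbb{N}_+$, $T\in\mathbb{N}$, and let $\mathcal{D}:\mathbb{R}^{D+T}\times\mathbb{R}^{D+T}\to[0,\infty)$ admit a neural (quasi-)metric representation (so $\mathcal{D}(x,y)$ depends only on $x_{1:D},y_{1:D}$). Then: (a) $\mathcal{D}$, viewed as a function of the spatial coordinates $(x_{1:D},y_{1:D})\in\mathbb{R}^D\times\mathbb{R}^D$, is a quasi-metric on $\mathbb{R}^D$; (b) if each $\mathsf{W}_j$ in the representation is orthogonal and $0<s_j,l_j\le1$ for all $j$, then it is a metric on $\mathbb{R}^D$; (c) if $T\in\mathbb{N}_+$, then $\mathcal{D}$ is a pseudo-quasi-metric on $\mathbb{R}^{D+T}$.
   Context: For $s,l>0$ define $\sigma_{s,l}:\mathbb{R}\to\mathbb{R}$ by $\sigma_{s,l}(x)=\operatorname{sgn}(x)|x|^s$ if $|x|<1$ and $\operatorname{sgn}(x)|x|^l$ if $|x|\ge1$ ($\operatorname{sgn}(x)=1$ for $x\ge0$, $-1$ otherwise); $\sigma\bullet$ is componentwise application. $I^+_D$ is the set of $D\times D$ matrices $\lambda I_D+|\tilde W|$ with $\lambda>0$, $\tilde W$ an arbitrary real $D\times D$ matrix, $|\cdot|$ entrywise absolute value. For $x\in\mathbb{R}^{D+T}$, $x_{1:D}$ denotes its first $D$ coordinates. $\mathcal{D}$ admits a neural (quasi-)metric representation if there are $J\in\mathbb{N}_+$, $s_0,l_0,\dots,s_J,l_J>0$, $\mathsf{W}_j\in I^+_D$ for $j<J$ and $\mathsf{W}_J\in(0,\infty)^{1\times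 D}$ such that $\mathcal{D}(x,y)=\mathsf{W}_J\sigma_{s_J,l_J}\bullet(u_{J-1})$, $u_j=\mathsf{W}_j\sigma_{s_j,l_j}\bullet(u_{j-1})$ for $j=1,\dots,J-1$, and $u_0=|\sigma_{s_0,l_0}\bullet(x_{1:D})-\sigma_{s_0,l_0}\bullet(y_{1:D})|$ (componentwise absolute value). A quasi-metric on a set $X$ is $d:X\times X\to[0,\infty)$ with $d(x,y)=0\iff x=y$, $d(x,y)=d(y,x)$, and $d(x,y)\le C(d(x,z)+d(z,y))$ for some constant $C\ge1$ and all $x,y,z$; it is a metric if $C=1$ works. A pseudo-quasi-metric satisfies the same except that $d(x,y)=0$ need not imply $x=y$ (but $d(x,x)=0$). *)

theory Defs
  imports Complex_Main
begin

text \<open>Points of R^m are represented as functions nat => real vanishing outside {0..<m}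
  (coordinate i of the paper is index i-1 here). Thus R^D is a subset of R^(D+T), and a point
  a of R^D is identified with (a,0) in R^(D+T); the first D coordinates of x are x restricted to {0..<D}.
  D x D matrices are functions nat => nat => real, only entries with indices < D matter.\<close>

definition Rn :: "nat \<Rightarrow> (nat \<Rightarrow> real) set" where
  "Rn m = {x. \<forall>i\<ge>m. x i = 0}"

definition sgn1 :: "real \<Rightarrow> real" where
  "sgn1 x = (if x \<ge> 0 then 1 else -1)"

definition sigma :: "real \<Rightarrow> real \<Rightarrow> real \<Rightarrow> real" where
  "sigma s l x = (if \<bar>x\<bar> < 1 then sgn1 x * \<bar>x\<bar> powr s else sgn1 x * \<bar>x\<bar> powr l)"

definition Iplus :: "nat \<Rightarrow> (nat \<Rightarrow> nat \<Rightarrow> real) \<Rightarrow> bool" where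
  "Iplus D M \<longleftrightarrow> (\<exists>lam::real. lam > 0 \<and> (\<exists>Wt :: nat \<Rightarrow> nat \<Rightarrow> real.
      \<forall>i<D. \<forall>k<D. M i k = lam * (if i = k then 1 else 0) + \<bar>Wt i k\<bar>))"

definition orthogonal_mat :: "nat \<Rightarrow> (nat \<Rightarrow> nat \<Rightarrow> real) \<Rightarrow> bool" where
  "orthogonal_mat D M \<longleftrightarrow> (\<forall>i<D. \<forall>k<D. (\<Sum>m<D. M i m * M k m) = (if i = k then 1 else 0))"

fun nn_layer :: "nat \<Rightarrow> (nat \<Rightarrow> real) \<Rightarrow> (nat \<Rightarrow> real) \<Rightarrow> (nat \<Rightarrow> nat \<Rightarrow> nat \<Rightarrow> real)
                  \<Rightarrow> (nat \<Rightarrow> real) \<Rightarrow> (nat \<Rightarrow> real) \<Rightarrow> nat \<Rightarrow> nat \<Rightarrow> real" where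
  "nn_layer D s l W x y 0 =
     (\<lambda>i. if i < D then \<bar>sigma (s 0) (l 0) (x i) - sigma (s 0) (l 0) (y i)\<bar> else 0)"
| "nn_layer D s l W x y (Suc j) =
     (\<lambda>i. if i < D then (\<Sum>k<D. W (Suc j) i k * sigma (s (Suc j)) (l (Suc j)) (nn_layer D s l W x y j k)) else 0)"

text \<open>Output W_J sigma_{s_J,l_J}(u_{J-1}), with W_J the row vector w.\<close>
definition neural_dist :: "nat \<Rightarrow> nat \<Rightarrow> (nat \<Rightarrow> real) \<Rightarrow> (nat \<Rightarrow> real) \<Rightarrow> (nat \<Rightarrow> nat \<Rightarrow> nat \<Rightarrow> real)
                  \<Rightarrow> (nat \<Rightarrow> real) \<Rightarrow> (nat \<Rightarrow> real) \<Rightarrow> (nat \<Rightarrow> real) \<Rightarrow> real" where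
  "neural_dist D J s l W w x y = (\<Sum>k<D. w k * sigma (s J) (l J) (nn_layer D s l W x y (J - 1) k))"

text \<open>The function Dist on R^(D+T) x R^(D+T) is given by the neural representation with
  depth J, exponents s_j,l_j (j = 0..J), matrices W_j in I^+_D (0 < j < J; W_0 does not occur
  in the formula) and positive row W_J = w.\<close>
definition neural_rep :: "nat \<Rightarrow> nat \<Rightarrow> ((nat \<Rightarrow> real) \<Rightarrow> (nat \<Rightarrow> real) \<Rightarrow> real) \<Rightarrow> nat
      \<Rightarrow> (nat \<Rightarrow> real) \<Rightarrow> (nat \<Rightarrow> real) \<Rightarrow> (nat \<Rightarrow> nat \<Rightarrow> nat \<Rightarrow> real) \<Rightarrow> (nat \<Rightarrow> real) \<Rightarrow> bool" where
  "neural_rep D T Dist J s l W w \<longleftrightarrow>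
     J \<ge> 1 \<and> (\<forall>j\<le>J. s j > 0 \<and> l j > 0) \<and> (\<forall>j. 0 < j \<and> j < J \<longrightarrow> Iplus D (W j)) \<and>
     (\<forall>k<D. w k > 0) \<and>
     (\<forall>x\<in>Rn (D + T). \<forall>y\<in>Rn (D + T). Dist x y = neural_dist D J s l W w x y)"

definition quasi_metric_on :: "'a set \<Rightarrow> ('a \<Rightarrow> 'a \<Rightarrow> real) \<Rightarrow> bool" where
  "quasi_metric_on X d \<longleftrightarrow>
     (\<forall>x\<in>X. \<forall>y\<in>X. d x y \<ge> 0 \<and> (d x y = 0 \<longleftrightarrow> x = y) \<and> d x y = d y x) \<and>
     (\<exists>C\<ge>1. \<forall>x\<in>X. \<forall>y\<in>X. \<forall>z\<in>X. d x y \<le> C * (d x z + d z y))"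

definition metric_on :: "'a set \<Rightarrow> ('a \<Rightarrow> 'a \<Rightarrow> real) \<Rightarrow> bool" where
  "metric_on X d \<longleftrightarrow>
     (\<forall>x\<in>X. \<forall>y\<in>X. d x y \<ge> 0 \<and> (d x y = 0 \<longleftrightarrow> x = y) \<and> d x y = d y x) \<and>
     (\<forall>x\<in>X. \<forall>y\<in>X. \<forall>z\<in>X. d x y \<le> d x z + d z y)"

definition pseudo_quasi_metric_on :: "'a set \<Rightarrow> ('a \<Rightarrow> 'a \<Rightarrow> real) \<Rightarrow> bool" where
  "pseudo_quasi_metric_on X d \<longleftrightarrow>
     (\<forall>x\<in>X. \<forall>y\<in>X. d x y \<ge> 0 \<and> d x x = 0 \<and> d x y = d y x) \<and>
     (\<exists>C\<ge>1. \<forall>x\<in>X. \<forall>y\<in>X. \<forall>z\<in>X. d x y \<le> C * (d x z + d z y))"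

end

theory Submission imports Defs begin

definition hh :: "real \<Rightarrow> real \<Rightarrow> real \<Rightarrow> real" where
  "hh s l t = (if t < 1 then t powr s else t powr l)"

lemma sigma_nn: "t \<ge> 0 \<Longrightarrow> sigma s l t = hh s l t"
  by (simp add: sigma_def hh_def sgn1_def)

lemma sigma_neg: "t < 0 \<Longrightarrow> sigma s l t = - hh s l (-t)"
  by (simp add: sigma_def hh_def sgn1_def)

lemma hh_nonneg: "hh s l t \<ge> 0"
  by (simp add: hh_def)

lemma hh_zero: "hh s l 0 = 0"
  by (simp add: hh_def)

lemma hh_pos: "t > 0 \<Longrightarrow> hh s l t > 0"
  by (simp add: hh_def)

lemma hh_strict_mono:
  assumes "s > 0" "l > 0" "0 \<le> a" "a < b"
  shows "hh s l a < hh s l b"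
proof (cases "b < 1")
  case True
  then show ?thesis using assms by (simp add: hh_def powr_less_mono2)
next
  case False
  show ?thesis
  proof (cases "a < 1")
    case True
    have "a powr s < 1" using assms True
      by (metis powr_less_mono2 powr_one_eq_one)
    moreover have "1 \<le> b powr l" using False assms ge_one_powr_ge_zero by auto
    ultimately show ?thesis using True False by (simp add: hh_def)
  next
    case False2: False
    then show ?thesis using assms False by (simp add: hh_def powr_less_mono2)
  qed
qed

lemma hh_mono: "s > 0 \<Longrightarrow> l > 0 \<Longrightarrow> 0 \<le> a \<Longrightarrow> a \<le> b \<Longrightarrow> hh s l a \<le> hh s l b"
  by (metis hh_strict_mono order_le_less)

lemma sigma_zero: "sigma s l 0 = 0"
  by (simp add: sigma_nn hh_zero)

lemma sigma_inj:
  assumes "s > 0" "l > 0" "sigma s l a = sigma s l b"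
  shows "a = b"
proof -
  have key: "\<And>x y. 0 \<le> x \<Longrightarrow> 0 \<le> y \<Longrightarrow> hh s l x = hh s l y \<Longrightarrow> x = y"
    using hh_strict_mono[OF assms(1,2)] by (metis linorder_neqE_linordered_idom order_less_irrefl)
  consider "a \<ge> 0" "b \<ge> 0" | "a \<ge> 0" "b < 0" | "a < 0" "b \<ge> 0" | "a < 0" "b < 0" by linarith
  then show ?thesis
  proof cases
    case 1 then show ?thesis using assms key by (simp add: sigma_nn)
  next
    case 2 then show ?thesis using assms hh_nonneg[of s l a] hh_pos[of "-b" s l]
      by (simp add: sigma_nn sigma_neg)
  next
    case 3 then show ?thesis using assms hh_nonneg[of s l b] hh_pos[of "-a" s l]
      by (simp add: sigma_nn sigma_neg)
  next
    case 4 then show ?thesis using assms key[of "-a" "-b"] by (simp add: sigma_nn sigma_neg)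
  qed
qed

lemma hh_scale:
  assumes "s > 0" "l > 0" "c \<ge> 1" "t \<ge> 0"
  shows "hh s l (c * t) \<le> c powr (max s l) * hh s l t"
proof (cases "t = 0")
  case True then show ?thesis by (simp add: hh_zero)
next
  case False
  hence t: "t > 0" using assms by simp
  have cs: "c powr s \<le> c powr (max s l)" and cl: "c powr l \<le> c powr (max s l)"
    using assms powr_mono by auto
  consider "c * t < 1" | "t \<ge> 1" | "t < 1" "c * t \<ge> 1" by linarith
  then show ?thesis
  proof cases
    case 1
    then have "t < 1" using assms t by (smt (verit) mult_le_cancel_right1)
    then show ?thesis using 1 assms t cs by (simp add: hh_def powr_mult mult_right_mono)
  next
    case 2
    then have "\<not> c * t < 1" using assms by (smt (verit) mult_le_cancel_right1)
    then show ?thesis using 2 assms t cl by (simp add: hh_def powr_mult mult_right_mono)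
  next
    case 3
    have "(c*t) powr l \<le> c powr (max s l) * t powr s"
    proof (cases "l \<le> s")
      case True
      have "(c*t) powr l \<le> (c*t) powr s" using powr_mono True 3 by auto
      also have "\<dots> = c powr s * t powr s" using assms t by (simp add: powr_mult)
      also have "\<dots> \<le> c powr (max s l) * t powr s" using cs by (simp add: mult_right_mono)
      finally show ?thesis .
    next
      case False
      have "(c*t) powr l = c powr l * t powr l" using assms t by (simp add: powr_mult)
      also have "\<dots> \<le> c powr l * t powr s" using powr_mono'[of s l t] False 3 t
        by (intro mult_left_mono) auto
      also have "\<dots> \<le> c powr (max s l) * t powr s" using cl by (simp add: mult_right_mono)
      finally show ?thesis .
    qed
    then show ?thesis using 3 by (simp add: hh_def)
  qed
qed

lemma hh_quasi:
  assumes "s > 0" "l > 0" "C \<ge> 1" "a \<ge> 0" "b \<ge> 0" "0 \<le> t" "t \<le> C * (a + b)"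
  shows "hh s l t \<le> (2 * C) powr (max s l) * (hh s l a + hh s l b)"
proof -
  have "hh s l t \<le> hh s l ((2 * C) * max a b)"
    using assms by (intro hh_mono) (auto intro: order_trans[OF assms(7)] mult_left_mono)
  also have "\<dots> \<le> (2 * C) powr (max s l) * hh s l (max a b)"
    using assms by (intro hh_scale) auto
  also have "\<dots> \<le> (2 * C) powr (max s l) * (hh s l a + hh s l b)"
    using hh_nonneg[of s l a] hh_nonneg[of s l b]
    by (intro mult_left_mono) (auto simp: max_def)
  finally show ?thesis .
qed

lemma hh_ratio:
  assumes "s > 0" "l > 0" "s \<le> 1" "l \<le> 1" "0 < t" "t \<le> u"
  shows "hh s l u * t \<le> hh s l t * u"
proof -
  have e: "\<And>x e::real. x > 0 \<Longrightarrow> x powr (e - 1) * x = x powr e"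
    proof - fix x e :: real assume "x > 0" then show "x powr (e - 1) * x = x powr e" using powr_add[of x "e - 1" 1] by simp qed
  have u: "u > 0" using assms by simp
  consider "u < 1" | "t \<ge> 1" | "t < 1" "u \<ge> 1" by linarith
  then show ?thesis
  proof cases
    case 1
    have "u powr (s-1) \<le> t powr (s-1)" using assms powr_mono2' by auto
    then have "u powr (s-1) * u * t \<le> t powr (s-1) * t * u"
      using assms u by (simp add: mult.commute mult.left_commute mult_left_mono)
    then show ?thesis using 1 assms e[OF assms(5)] e[OF u] by (simp add: hh_def)
  next
    case 2
    have "u powr (l-1) \<le> t powr (l-1)" using assms powr_mono2' by auto
    then have "u powr (l-1) * u * t \<le> t powr (l-1) * t * u"
      using assms u by (simp add: mult.commute mult.left_commute mult_left_mono)
    then show ?thesis using 2 assms e[OF assms(5)] e[OF u] by (simp add: hh_def)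
  next
    case 3
    have "u powr (l-1) \<le> 1" using assms 3 by (metis diff_le_0_iff_le powr_mono2' powr_one_eq_one zero_less_one)
    moreover have "1 \<le> t powr (s-1)" using assms 3 by (metis diff_le_0_iff_le less_imp_le powr_mono2' powr_one_eq_one)
    ultimately have "u powr (l-1) \<le> t powr (s-1)" by linarith
    then have "u powr (l-1) * u * t \<le> t powr (s-1) * t * u"
      using assms u by (simp add: mult.commute mult.left_commute mult_left_mono)
    then show ?thesis using 3 assms e[OF assms(5)] e[OF u] by (simp add: hh_def)
  qed
qed

lemma hh_subadd:
  assumes "s > 0" "l > 0" "s \<le> 1" "l \<le> 1" "a \<ge> 0" "b \<ge> 0" "0 \<le> t" "t \<le> a + b"
  shows "hh s l t \<le> hh s l a + hh s l b"
proof -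
  have m: "hh s l t \<le> hh s l (a + b)" using assms by (intro hh_mono) auto
  show ?thesis
  proof (cases "a = 0 \<or> b = 0")
    case True then show ?thesis using m hh_zero[of s l] by auto
  next
    case False
    hence ab: "a > 0" "b > 0" using assms by auto
    have 1: "hh s l (a+b) * a \<le> hh s l a * (a+b)" using assms ab by (intro hh_ratio) auto
    have 2: "hh s l (a+b) * b \<le> hh s l b * (a+b)" using assms ab by (intro hh_ratio) auto
    have "hh s l (a+b) * (a+b) \<le> (hh s l a + hh s l b) * (a+b)"
      using 1 2 by (simp add: algebra_simps)
    hence "hh s l (a+b) \<le> hh s l a + hh s l b" using ab by simp
    with m show ?thesis by linarith
  qed
qed


lemma sum_quasi:
  fixes c t a b :: "nat \<Rightarrow> real"
  assumes "\<And>k. k < D \<Longrightarrow> c k \<ge> 0" "\<And>k. k < D \<Longrightarrow> t k \<ge> 0 \<and> a k \<ge> 0 \<and> b k \<ge> 0"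
    "\<And>k. k < D \<Longrightarrow> t k \<le> C * (a k + b k)" "C \<ge> 1" "s > 0" "l > 0"
  shows "(\<Sum>k<D. c k * sigma s l (t k)) \<le> (2*C) powr max s l * ((\<Sum>k<D. c k * sigma s l (a k)) + (\<Sum>k<D. c k * sigma s l (b k)))"
proof -
  have "(\<Sum>k<D. c k * sigma s l (t k)) \<le> (\<Sum>k<D. c k * ((2*C) powr max s l * (sigma s l (a k) + sigma s l (b k))))"
  proof (rule sum_mono)
    fix k assume "k \<in> {..<D}"
    then have k: "k < D" by simp
    show "c k * sigma s l (t k) \<le> c k * ((2*C) powr max s l * (sigma s l (a k) + sigma s l (b k)))"
      using assms(1)[OF k] assms(2)[OF k] hh_quasi[OF assms(5,6,4), of "a k" "b k" "t k"] assms(3)[OF k]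
      by (intro mult_left_mono) (auto simp: sigma_nn)
  qed
  also have "\<dots> = (2*C) powr max s l * ((\<Sum>k<D. c k * sigma s l (a k)) + (\<Sum>k<D. c k * sigma s l (b k)))"
    by (simp add: sum_distrib_left sum.distrib algebra_simps)
  finally show ?thesis .
qed

lemma sum_sub:
  fixes c t a b :: "nat \<Rightarrow> real"
  assumes "\<And>k. k < D \<Longrightarrow> c k \<ge> 0" "\<And>k. k < D \<Longrightarrow> t k \<ge> 0 \<and> a k \<ge> 0 \<and> b k \<ge> 0"
    "\<And>k. k < D \<Longrightarrow> t k \<le> a k + b k" "s > 0" "l > 0" "s \<le> 1" "l \<le> 1"
  shows "(\<Sum>k<D. c k * sigma s l (t k)) \<le> (\<Sum>k<D. c k * sigma s l (a k)) + (\<Sum>k<D. c k * sigma s l (b k))"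
proof -
  have "(\<Sum>k<D. c k * sigma s l (t k)) \<le> (\<Sum>k<D. c k * (sigma s l (a k) + sigma s l (b k)))"
  proof (rule sum_mono)
    fix k assume "k \<in> {..<D}"
    then have k: "k < D" by simp
    show "c k * sigma s l (t k) \<le> c k * (sigma s l (a k) + sigma s l (b k))"
      using assms(1)[OF k] assms(2)[OF k] hh_subadd[OF assms(4-7), of "a k" "b k" "t k"] assms(3)[OF k]
      by (intro mult_left_mono) (auto simp: sigma_nn)
  qed
  also have "\<dots> = (\<Sum>k<D. c k * sigma s l (a k)) + (\<Sum>k<D. c k * sigma s l (b k))"
    by (simp add: sum.distrib algebra_simps)
  finally show ?thesis .
qed

lemma layer_sym: "nn_layer D s l W x y j = nn_layer D s l W y x j"
  by (induction j) (auto simp: abs_minus_commute)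

lemma layer_same: "(\<And>i. i < D \<Longrightarrow> x i = y i) \<Longrightarrow> nn_layer D s l W x y j i = 0"
  by (induction j arbitrary: i) (auto simp: sigma_zero)

lemma layer_nn:
  assumes "\<And>j i k. 0 < j \<Longrightarrow> j < J \<Longrightarrow> i < D \<Longrightarrow> k < D \<Longrightarrow> W j i k \<ge> 0"
  shows "j < J \<Longrightarrow> nn_layer D s l W x y j i \<ge> 0"
proof (induction j arbitrary: i)
  case 0 then show ?case by simp
next
  case (Suc j)
  show ?case
    using Suc.IH Suc.prems assms by (auto simp: sigma_nn hh_nonneg intro!: sum_nonneg)
qed

lemma layer_zero:
  assumes "\<And>j i k. 0 < j \<Longrightarrow> j < J \<Longrightarrow> i < D \<Longrightarrow> k < D \<Longrightarrow> W j i k \<ge> 0"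
    and "\<And>j i. 0 < j \<Longrightarrow> j < J \<Longrightarrow> i < D \<Longrightarrow> W j i i > 0"
    and "\<And>j. j \<le> J \<Longrightarrow> s j > 0 \<and> l j > 0"
  shows "j < J \<Longrightarrow> (\<forall>i<D. nn_layer D s l W x y j i = 0) \<Longrightarrow> (\<forall>i<D. x i = y i)"
proof (induction j)
  case 0
  show ?case
  proof (intro allI impI)
    fix i assume i: "i < D"
    with 0 have "sigma (s 0) (l 0) (x i) = sigma (s 0) (l 0) (y i)" by auto
    then show "x i = y i" using sigma_inj assms(3)[of 0] by auto
  qed
next
  case (Suc j)
  have jJ: "j < J" using Suc.prems by simp
  have "\<forall>i<D. nn_layer D s l W x y j i = 0"
  proof (intro allI impI)
    fix i assume i: "i < D"
    let ?f = "\<lambda>k. W (Suc j) i k * sigma (s (Suc j)) (l (Suc j)) (nn_layer D s l W x y j k)"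
    have nn: "\<forall>k\<in>{..<D}. ?f k \<ge> 0"
      using assms(1)[of "Suc j" i] layer_nn[OF assms(1) jJ] Suc.prems i
      by (auto simp: sigma_nn hh_nonneg)
    have "sum ?f {..<D} = 0" using Suc.prems(2) i by auto
    then have "?f i = 0" using sum_nonneg_eq_0_iff[of "{..<D}" ?f] nn i by auto
    then have "sigma (s (Suc j)) (l (Suc j)) (nn_layer D s l W x y j i) = sigma (s (Suc j)) (l (Suc j)) 0"
      using assms(2)[of "Suc j" i] Suc.prems i by (simp add: sigma_zero)
    then show "nn_layer D s l W x y j i = 0"
      using sigma_inj assms(3)[of "Suc j"] Suc.prems by auto
  qed
  then show ?case using Suc.IH jJ by blast
qed

lemma layer_quasi:
  assumes "\<And>j i k. 0 < j \<Longrightarrow> j < J \<Longrightarrow> i < D \<Longrightarrow> k < D \<Longrightarrow> W j i k \<ge> 0"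
    and "\<And>j. j \<le> J \<Longrightarrow> s j > 0 \<and> l j > 0"
  shows "j < J \<Longrightarrow> \<exists>C\<ge>1. \<forall>x y z. \<forall>i<D. nn_layer D s l W x y j i \<le> C * (nn_layer D s l W x z j i + nn_layer D s l W z y j i)"
proof (induction j)
  case 0
  show ?case by (rule exI[of _ 1]) auto
next
  case (Suc j)
  have jJ: "j < J" using Suc.prems by simp
  obtain C where C: "C \<ge> 1" "\<forall>x y z. \<forall>i<D. nn_layer D s l W x y j i \<le> C * (nn_layer D s l W x z j i + nn_layer D s l W z y j i)"
    using Suc.IH jJ by blast
  let ?C = "(2*C) powr max (s (Suc j)) (l (Suc j))"
  have C1: "?C \<ge> 1" using C assms(2)[of "Suc j"] Suc.prems by (intro ge_one_powr_ge_zero) auto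
  show ?case
  proof (intro exI[of _ ?C] conjI C1 allI impI)
    fix x y z i assume i: "i < D"
    show "nn_layer D s l W x y (Suc j) i \<le> ?C * (nn_layer D s l W x z (Suc j) i + nn_layer D s l W z y (Suc j) i)"
      using sum_quasi[of D "W (Suc j) i" "nn_layer D s l W x y j" "nn_layer D s l W x z j" "nn_layer D s l W z y j" C "s (Suc j)" "l (Suc j)"]
        assms(1)[of "Suc j" i] Suc.prems i layer_nn[OF assms(1) jJ] C assms(2)[of "Suc j"]
      by auto
  qed
qed

lemma layer_metric:
  assumes "\<And>j i k. 0 < j \<Longrightarrow> j < J \<Longrightarrow> i < D \<Longrightarrow> k < D \<Longrightarrow> W j i k \<ge> 0"
    and "\<And>j. j \<le> J \<Longrightarrow> s j > 0 \<and> l j > 0 \<and> s j \<le> 1 \<and> l j \<le> 1"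
  shows "j < J \<Longrightarrow> \<forall>i<D. nn_layer D s l W x y j i \<le> nn_layer D s l W x z j i + nn_layer D s l W z y j i"
proof (induction j)
  case 0
  show ?case by auto
next
  case (Suc j)
  have jJ: "j < J" using Suc.prems by simp
  show ?case
  proof (intro allI impI)
    fix i assume i: "i < D"
    show "nn_layer D s l W x y (Suc j) i \<le> nn_layer D s l W x z (Suc j) i + nn_layer D s l W z y (Suc j) i"
      using sum_sub[of D "W (Suc j) i" "nn_layer D s l W x y j" "nn_layer D s l W x z j" "nn_layer D s l W z y j" "s (Suc j)" "l (Suc j)"]
        assms(1)[of "Suc j" i] Suc.prems i layer_nn[OF assms(1) jJ] Suc.IH jJ assms(2)[of "Suc j"]
      by auto
  qed
qed


theorem mainTheorem5:
  fixes D T J :: nat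
    and Dist :: "(nat \<Rightarrow> real) \<Rightarrow> (nat \<Rightarrow> real) \<Rightarrow> real"
    and s l :: "nat \<Rightarrow> real" and W :: "nat \<Rightarrow> nat \<Rightarrow> nat \<Rightarrow> real" and w :: "nat \<Rightarrow> real"
  assumes "D \<ge> 1"
    and "neural_rep D T Dist J s l W w"
  shows "quasi_metric_on (Rn D) Dist
    \<and> (((\<forall>j. 0 < j \<and> j < J \<longrightarrow> orthogonal_mat D (W j)) \<and> (\<forall>j\<le>J. s j \<le> 1 \<and> l j \<le> 1))
         \<longrightarrow> metric_on (Rn D) Dist)
    \<and> (T \<ge> 1 \<longrightarrow> pseudo_quasi_metric_on (Rn (D + T)) Dist)"
proof -
  note R = assms(2)[unfolded neural_rep_def]
  have J1: "J \<ge> 1" and sl: "\<And>j. j \<le> J \<Longrightarrow> s j > 0 \<and> l j > 0"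
    and IP: "\<And>j. 0 < j \<Longrightarrow> j < J \<Longrightarrow> Iplus D (W j)" and wpos: "\<And>k. k < D \<Longrightarrow> w k > 0"
    and DD: "\<And>x y. x \<in> Rn (D + T) \<Longrightarrow> y \<in> Rn (D + T) \<Longrightarrow> Dist x y = neural_dist D J s l W w x y"
    using R by auto
  have Wnn: "\<And>j i k. 0 < j \<Longrightarrow> j < J \<Longrightarrow> i < D \<Longrightarrow> k < D \<Longrightarrow> W j i k \<ge> 0"
  proof -
    fix j i k assume "0 < j" "j < J" "i < D" "k < D"
    then obtain lam Wt where "lam > 0" "\<forall>i<D. \<forall>k<D. W j i k = lam * (if i = k then 1 else 0) + \<bar>Wt i k\<bar>"
      using IP unfolding Iplus_def by blast
    then show "W j i k \<ge> 0" using \<open>i < D\<close> \<open>k < D\<close> by auto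
  qed
  have Wd: "\<And>j i. 0 < j \<Longrightarrow> j < J \<Longrightarrow> i < D \<Longrightarrow> W j i i > 0"
  proof -
    fix j i assume "0 < j" "j < J" "i < D"
    then obtain lam Wt where "lam > 0" "\<forall>i<D. \<forall>k<D. W j i k = lam * (if i = k then 1 else 0) + \<bar>Wt i k\<bar>"
      using IP unfolding Iplus_def by blast
    then show "W j i i > 0" using \<open>i < D\<close> by (auto intro: add_pos_nonneg)
  qed
  define u where "u = (\<lambda>x y. nn_layer D s l W x y (J - 1))"
  have JJ: "J - 1 < J" using J1 by simp
  have nd: "\<And>x y. neural_dist D J s l W w x y = (\<Sum>k<D. w k * sigma (s J) (l J) (u x y k))"
    by (simp add: neural_dist_def u_def)
  have unn: "\<And>x y k. u x y k \<ge> 0" unfolding u_def using layer_nn[where J=J and D=D and W=W, OF Wnn JJ] by blast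
  have slJ: "s J > 0" "l J > 0" using sl by auto
  have nn: "\<And>x y. neural_dist D J s l W w x y \<ge> 0"
    unfolding nd using wpos unn by (auto simp: sigma_nn hh_nonneg less_imp_le intro!: sum_nonneg mult_nonneg_nonneg)
  have sym: "\<And>x y. neural_dist D J s l W w x y = neural_dist D J s l W w y x"
    unfolding nd u_def by (subst layer_sym) (rule refl)
  have refl: "\<And>x. neural_dist D J s l W w x x = 0"
  proof -
    fix x :: "nat \<Rightarrow> real"
    have "\<And>k. nn_layer D s l W x x (J - 1) k = 0" by (rule layer_same) (rule refl)
    then show "neural_dist D J s l W w x x = 0" unfolding nd u_def by (simp add: sigma_zero)
  qed
  have zero: "\<And>x y. neural_dist D J s l W w x y = 0 \<longleftrightarrow> (\<forall>i<D. x i = y i)"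
  proof
    fix x y :: "nat \<Rightarrow> real" assume "neural_dist D J s l W w x y = 0"
    then have 0: "(\<Sum>k<D. w k * sigma (s J) (l J) (u x y k)) = 0" using nd by simp
    let ?f = "\<lambda>k. w k * sigma (s J) (l J) (u x y k)"
    have fnn: "\<And>k. k \<in> {..<D} \<Longrightarrow> ?f k \<ge> 0"
      using wpos unn by (auto simp: sigma_nn hh_nonneg less_imp_le)
    have fz: "\<forall>k\<in>{..<D}. ?f k = 0"
      using sum_nonneg_eq_0_iff[OF finite_lessThan fnn] 0 by simp
    have uz: "\<forall>k<D. nn_layer D s l W x y (J - 1) k = 0"
    proof (intro allI impI)
      fix k assume k: "k < D"
      have "w k * sigma (s J) (l J) (u x y k) = 0" using fz k by simp
      then have "sigma (s J) (l J) (u x y k) = 0" using wpos[OF k] by simp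
      then have "sigma (s J) (l J) (u x y k) = sigma (s J) (l J) 0"
        by (simp add: sigma_zero)
      then have "u x y k = 0" by (rule sigma_inj[OF slJ])
      then show "nn_layer D s l W x y (J - 1) k = 0" by (simp add: u_def)
    qed
    show "\<forall>i<D. x i = y i"
      by (rule layer_zero[where J=J and D=D and W=W and s=s and l=l, OF Wnn Wd sl JJ uz])
  next
    fix x y :: "nat \<Rightarrow> real" assume "\<forall>i<D. x i = y i"
    then have "\<And>k. nn_layer D s l W x y (J - 1) k = 0" by (intro layer_same) auto
    then show "neural_dist D J s l W w x y = 0"
      unfolding nd u_def by (simp add: sigma_zero)
  qed
  obtain C where C: "C \<ge> 1" "\<forall>x y z. \<forall>i<D. u x y i \<le> C * (u x z i + u z y i)"
    using layer_quasi[where J=J and D=D and W=W and s=s and l=l, OF Wnn sl JJ] unfolding u_def by blast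
  let ?C = "(2*C) powr max (s J) (l J)"
  have C1: "?C \<ge> 1" using C slJ by (intro ge_one_powr_ge_zero) auto
  have quasi: "\<And>x y z. neural_dist D J s l W w x y \<le> ?C * (neural_dist D J s l W w x z + neural_dist D J s l W w z y)"
  proof -
    fix x y z
    show "neural_dist D J s l W w x y \<le> ?C * (neural_dist D J s l W w x z + neural_dist D J s l W w z y)"
      unfolding nd
      by (rule sum_quasi[of D w "u x y" "u x z" "u z y" C "s J" "l J"])
        (use wpos unn C slJ in \<open>auto simp: less_imp_le\<close>)
  qed
  have sub: "Rn D \<subseteq> Rn (D + T)" unfolding Rn_def by auto
  have eqD: "\<And>x y. x \<in> Rn D \<Longrightarrow> y \<in> Rn D \<Longrightarrow> (\<forall>i<D. x i = y i) \<longleftrightarrow> x = y"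
  proof
    fix x y :: "nat \<Rightarrow> real" assume "x \<in> Rn D" "y \<in> Rn D" "\<forall>i<D. x i = y i"
    then show "x = y"
    proof (intro ext)
      fix i
      show "x i = y i"
      proof (cases "i < D")
        case True then show ?thesis using \<open>\<forall>i<D. x i = y i\<close> by simp
      next
        case False then show ?thesis using \<open>x \<in> Rn D\<close> \<open>y \<in> Rn D\<close> unfolding Rn_def by simp
      qed
    qed
  qed auto
  have A: "quasi_metric_on (Rn D) Dist"
    unfolding quasi_metric_on_def
  proof (intro conjI ballI)
    fix x y assume xy: "x \<in> Rn D" "y \<in> Rn D"
    then have xy': "x \<in> Rn (D+T)" "y \<in> Rn (D+T)" using sub by auto
    show "Dist x y \<ge> 0" using DD[OF xy'] nn by simp
    show "Dist x y = 0 \<longleftrightarrow> x = y" using DD[OF xy'] zero eqD[OF xy] by simp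
    show "Dist x y = Dist y x" using DD[OF xy'] DD[OF xy'(2,1)] sym by simp
  next
    show "\<exists>C\<ge>1. \<forall>x\<in>Rn D. \<forall>y\<in>Rn D. \<forall>z\<in>Rn D. Dist x y \<le> C * (Dist x z + Dist z y)"
      proof (intro exI[of _ ?C] conjI C1 ballI)
      fix x y z assume "x \<in> Rn D" "y \<in> Rn D" "z \<in> Rn D"
      then have "x \<in> Rn (D+T)" "y \<in> Rn (D+T)" "z \<in> Rn (D+T)" using sub by auto
      then show "Dist x y \<le> ?C * (Dist x z + Dist z y)" using quasi[of x y z] DD by simp
    qed
  qed
  have B: "((\<forall>j. 0 < j \<and> j < J \<longrightarrow> orthogonal_mat D (W j)) \<and> (\<forall>j\<le>J. s j \<le> 1 \<and> l j \<le> 1))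
         \<longrightarrow> metric_on (Rn D) Dist"
  proof
    assume H: "(\<forall>j. 0 < j \<and> j < J \<longrightarrow> orthogonal_mat D (W j)) \<and> (\<forall>j\<le>J. s j \<le> 1 \<and> l j \<le> 1)"
    have sl1: "\<And>j. j \<le> J \<Longrightarrow> s j > 0 \<and> l j > 0 \<and> s j \<le> 1 \<and> l j \<le> 1" using H sl by auto
    have tri: "\<And>x y z. neural_dist D J s l W w x y \<le> neural_dist D J s l W w x z + neural_dist D J s l W w z y"
    proof -
      fix x y z
      have lm: "\<forall>i<D. u x y i \<le> u x z i + u z y i"
        unfolding u_def by (rule layer_metric[where J=J and D=D and W=W and s=s and l=l, OF Wnn sl1 JJ])
      show "neural_dist D J s l W w x y \<le> neural_dist D J s l W w x z + neural_dist D J s l W w z y"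
        unfolding nd
        by (rule sum_sub[of D w "u x y" "u x z" "u z y" "s J" "l J"])
          (use wpos unn sl1[of J] lm in \<open>auto simp: less_imp_le\<close>)
    qed
    show "metric_on (Rn D) Dist"
      unfolding metric_on_def
    proof (intro conjI ballI)
      fix x y assume xy: "x \<in> Rn D" "y \<in> Rn D"
      then have xy': "x \<in> Rn (D+T)" "y \<in> Rn (D+T)" using sub by auto
      show "Dist x y \<ge> 0" using DD[OF xy'] nn by simp
      show "Dist x y = 0 \<longleftrightarrow> x = y" using DD[OF xy'] zero eqD[OF xy] by simp
      show "Dist x y = Dist y x" using DD[OF xy'] DD[OF xy'(2,1)] sym by simp
    next
      fix x y z assume "x \<in> Rn D" "y \<in> Rn D" "z \<in> Rn D"
      then have "x \<in> Rn (D+T)" "y \<in> Rn (D+T)" "z \<in> Rn (D+T)" using sub by auto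
      then show "Dist x y \<le> Dist x z + Dist z y" using tri[of x y z] DD by simp
    qed
  qed
  have Cc: "T \<ge> 1 \<longrightarrow> pseudo_quasi_metric_on (Rn (D + T)) Dist"
    unfolding pseudo_quasi_metric_on_def
  proof (intro impI conjI ballI)
    fix x y assume xy': "x \<in> Rn (D+T)" "y \<in> Rn (D+T)"
    show "Dist x y \<ge> 0" using DD[OF xy'] nn by simp
    show "Dist x x = 0" using DD[OF xy'(1,1)] refl by simp
    show "Dist x y = Dist y x" using DD[OF xy'] DD[OF xy'(2,1)] sym by simp
  next
    show "\<exists>C\<ge>1. \<forall>x\<in>Rn (D+T). \<forall>y\<in>Rn (D+T). \<forall>z\<in>Rn (D+T). Dist x y \<le> C * (Dist x z + Dist z y)"
      proof (intro exI[of _ ?C] conjI C1 ballI)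
      fix x y z assume "x \<in> Rn (D+T)" "y \<in> Rn (D+T)" "z \<in> Rn (D+T)"
      then show "Dist x y \<le> ?C * (Dist x z + Dist z y)" using quasi[of x y z] DD by simp
    qed
  qed
  show ?thesis using A B Cc by blast
qed

end
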